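(* There is an absolute constant $C>0$ such that the following holds. Let $0<\delta\le\frac14$, $0<a<\pi$, $\lambda\ge1$, $M\ge1$, $0<\kappa\le1$, and $0\le\mu<1-\delta$. Let $g$ be a continuous function on the closed unit disk, analytic on its interior, satisfying $|g(\delta)|\ge\kappa$ and, for every $0<\gamma\le1-\delta$, $|z|\le1-\gamma\Rightarrow|g(z)|\le\frac{\lambda M}{\gamma}$. Let $\Gamma_\mu$ be the circle with center $\delta$ and radius $1-\delta-\mu$, and let $P$ be the closed arc of $\Gamma_\mu$ that is symmetric with respect to the real axis, has midpoint $1-\mu$, and has arc length $a$. Then $$\max_{z\in P}|g(z)|\ge\left(\frac{\delta\kappa}{\lambda M}\right)^{C/a}.$$
   Context: The paper writes the bound as $(\delta\kappa/(\lambda M))^{O(1/a)}$, where $O(\cdot)$ hides an absolute constant. *)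

theory Defs
  imports "HOL-Analysis.Analysis"
begin

text \<open>The closed arc of Gamma_mu symmetric w.r.t. the real axis, with midpoint
  delta + r = 1 - mu and arc length a, consists of the points
  delta + r e^{i t} with |t| \<le> a / (2 r).\<close>
definition arcP :: "real \<Rightarrow> real \<Rightarrow> real \<Rightarrow> complex set" where
  "arcP \<delta> \<mu> a =
     (let r = 1 - \<delta> - \<mu> in
      {complex_of_real \<delta> + complex_of_real r * cis t | t. \<bar>t\<bar> \<le> a / (2 * r)})"

end

theory Submission
  imports Defs "HOL-Complex_Analysis.Complex_Analysis"
begin


lemma geom:
  fixes g :: "complex \<Rightarrow> complex" and v :: complex
  assumes d: "0 < \<delta>" "\<delta> \<le> 1/4" and r: "0 < r" "\<delta> + r \<le> 1"
    and lm: "0 < lam*M"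
    and hyp: "\<forall>\<gamma>::real. 0 < \<gamma> \<and> \<gamma> \<le> 1 - \<delta> \<longrightarrow> (\<forall>z. norm z \<le> 1 - \<gamma> \<longrightarrow> norm (g z) \<le> lam * M / \<gamma>)"
    and v: "norm v = r"
  shows "norm (g (complex_of_real \<delta> + v)) * norm (v - complex_of_real r)^2 \<le> 2*lam*M*r/\<delta>"
proof (cases "v = complex_of_real r")
  case True
  have "0 < 2*(lam*M)*r/\<delta>" using lm r d by simp
  then show ?thesis using True by (simp add: mult.assoc)
next
  case False
  define q where "q = norm (v - of_real r)^2"
  have q: "q > 0" using False by (simp add: q_def)
  define \<gamma> where "\<gamma> = \<delta>*q/(2*r)"
  have ReIm: "(Re v)^2 + (Im v)^2 = r^2" using v cmod_power2 by metis
  have qe: "q = (Re v - r)^2 + (Im v)^2" by (simp add: q_def cmod_power2)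
  hence qe2: "q = 2*r^2 - 2*r*Re v" using ReIm by (simp add: power2_eq_square algebra_simps)
  have "norm (v - of_real r) \<le> 2*r" using norm_triangle_ineq4[of v "of_real r"] v r by simp
  hence q4: "q \<le> 4*r^2" unfolding q_def using power_mono[of _ "2*r" 2] by (simp add: power_mult_distrib)
  have g0: "\<gamma> > 0" using q d r by (simp add: \<gamma>_def)
  have "\<delta>*q \<le> \<delta>*(4*r^2)" using q4 d by (simp add: mult_left_mono)
  hence "\<gamma> \<le> \<delta>*(4*r^2)/(2*r)" unfolding \<gamma>_def by (rule divide_right_mono) (use r in auto)
  also have "\<dots> = 2*\<delta>*r" using r by (simp add: power2_eq_square)
  finally have g1: "\<gamma> \<le> 2*\<delta>*r" .
  have "2*\<delta>*r \<le> (1/2)*r" using mult_right_mono[of "2*\<delta>" "1/2" r] d r by simp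
  hence g2: "\<gamma> \<le> 1 - \<delta>" using g1 d r by linarith
  have nz: "norm (of_real \<delta> + v)^2 = (\<delta> + r)^2 - 2*\<gamma>"
  proof -
    have "norm (of_real \<delta> + v)^2 = (\<delta> + Re v)^2 + (Im v)^2" by (simp add: cmod_power2)
    also have "\<dots> = \<delta>^2 + 2*\<delta>*Re v + ((Re v)^2 + (Im v)^2)" by (simp add: power2_eq_square algebra_simps)
    also have "\<dots> = \<delta>^2 + 2*\<delta>*Re v + r^2" using ReIm by simp
    also have "\<gamma> = \<delta>*(r - Re v)" unfolding \<gamma>_def qe2 using r by (simp add: field_simps power2_eq_square)
    hence "\<delta>^2 + 2*\<delta>*Re v + r^2 = (\<delta> + r)^2 - 2*\<gamma>" by (simp add: power2_eq_square algebra_simps)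
    finally show ?thesis .
  qed
  have "(\<delta>+r)^2 \<le> 1" using d r by (simp add: power_le_one)
  moreover have "(1-\<gamma>)^2 = 1 - 2*\<gamma> + \<gamma>^2" by (simp add: power2_eq_square algebra_simps)
  moreover have "\<gamma>^2 \<ge> 0" by simp
  ultimately have "norm (of_real \<delta> + v)^2 \<le> (1-\<gamma>)^2" using nz by linarith
  moreover have "0 \<le> 1 - \<gamma>" using g2 d by linarith
  ultimately have nb: "norm (of_real \<delta> + v) \<le> 1 - \<gamma>" by (rule power2_le_imp_le)
  have gb: "norm (g (of_real \<delta> + v)) \<le> lam*M/\<gamma>" using hyp g0 g2 nb by blast
  have "norm (g (complex_of_real \<delta> + v)) * q \<le> lam*M/\<gamma> * q" by (rule mult_right_mono[OF gb]) (use q in simp)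
  also have "\<dots> = 2*lam*M*r/\<delta>" unfolding \<gamma>_def using q d r by (simp add: field_simps)
  finally show ?thesis by (simp add: q_def)
qed

lemma arc_pt:
  assumes r: "r = 1 - \<delta> - \<mu>" "0 < r" and n: "n \<ge> 1" "2*pi/real n \<le> a/r"
    and w: "norm w = r"
  shows "\<exists>k<n. complex_of_real \<delta> + cis (2*pi*real k/real n) * w \<in> arcP \<delta> \<mu> a"
proof -
  define s where "s = 2*pi/real n"
  have s0: "s > 0" using n by (simp add: s_def)
  define \<phi> where "\<phi> = Arg w"
  have wr: "w = of_real r * cis \<phi>" using rcis_cmod_Arg[of w] w by (simp add: rcis_def \<phi>_def)
  define K where "K = floor (-\<phi>/s + 1/2)"
  have K1: "real_of_int K \<le> -\<phi>/s + 1/2" and K2: "-\<phi>/s + 1/2 < real_of_int K + 1"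
    unfolding K_def by linarith+
  define t where "t = \<phi> + s*K"
  have "s*real_of_int K \<le> s*(-\<phi>/s + 1/2)" using K1 s0 by (simp add: mult_left_mono)
  moreover have "s*(-\<phi>/s + 1/2) = -\<phi> + s/2" using s0 by (simp add: field_simps)
  ultimately have t1: "t \<le> s/2" by (simp add: t_def)
  have "s*(-\<phi>/s + 1/2) < s*(real_of_int K + 1)" using K2 s0 by (simp add: mult_strict_left_mono)
  moreover have "s*(-\<phi>/s + 1/2) = -\<phi> + s/2" using s0 by (simp add: field_simps)
  ultimately have t2: "-s/2 < t" by (simp add: t_def algebra_simps)
  have ta: "\<bar>t\<bar> \<le> a/(2*r)" using t1 t2 n(2) unfolding s_def by auto
  define k where "k = nat (K mod int n)"
  have kn: "k < n" using n by (simp add: k_def nat_less_iff)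
  have kK: "real k = real_of_int K - real n * real_of_int (K div int n)"
  proof -
    have "K mod int n = K - int n * (K div int n)" by (simp add: minus_div_mult_eq_mod [symmetric])
    moreover have "K mod int n \<ge> 0" using n by simp
    ultimately show ?thesis unfolding k_def by (metis of_int_of_nat_eq of_int_diff of_int_mult of_int_of_nat_eq nat_0_le)
  qed
  have "2*pi*real k/real n = s*K - 2*pi*real_of_int (K div int n)"
    using n unfolding kK s_def by (simp add: field_simps)
  hence ang: "2*pi*real k/real n + \<phi> = t + 2*pi*real_of_int (- (K div int n))"
    by (simp add: t_def)
  have "cis (2*pi*real k/real n) * w = of_real r * cis (2*pi*real k/real n + \<phi>)"
    unfolding wr by (simp add: cis_mult[symmetric] algebra_simps)
  also have "\<dots> = of_real r * (cis t * cis (2*pi*real_of_int (- (K div int n))))"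
    unfolding ang by (simp add: cis_mult)
  also have "\<dots> = of_real r * cis t"
    by (simp del: of_int_minus)
  finally have eq: "cis (2*pi*real k/real n) * w = of_real r * cis t" .
  show ?thesis
    apply (rule exI[of _ k])
    using kn eq ta r unfolding arcP_def Let_def by auto
qed

lemma key:
  fixes g :: "complex \<Rightarrow> complex"
  assumes d: "0 < \<delta>" "\<delta> \<le> 1/4" and mu: "0 \<le> \<mu>" "\<mu> < 1 - \<delta>"
    and lm: "0 < lam*M"
    and cont: "continuous_on (cball 0 1) g" and hol: "g holomorphic_on ball 0 1"
    and hyp: "\<forall>\<gamma>::real. 0 < \<gamma> \<and> \<gamma> \<le> 1 - \<delta> \<longrightarrow> (\<forall>z. norm z \<le> 1 - \<gamma> \<longrightarrow> norm (g z) \<le> lam * M / \<gamma>)"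
    and n: "n \<ge> 1" "2*pi/real n \<le> a/(1-\<delta>-\<mu>)"
    and m: "\<forall>z\<in>arcP \<delta> \<mu> a. norm (g z) \<le> m"
  shows "norm (g \<delta>)^n * (1-\<delta>-\<mu>)^(2*n) \<le> 4*(1-\<delta>-\<mu>)^2*m*(2*lam*M*(1-\<delta>-\<mu>)/\<delta>)^(n-1)"
proof -
  define r where "r = 1-\<delta>-\<mu>"
  have r0: "0 < r" and r1: "\<delta> + r \<le> 1" using mu by (auto simp: r_def)
  define G where "G = (\<lambda>v. g (of_real \<delta> + v) * (v - of_real r)^2)"
  define c where "c = (\<lambda>k::nat. cis (2*pi*real k/real n))"
  have c1: "norm (c k) = 1" for k by (simp add: c_def)
  define h where "h = (\<lambda>w. \<Prod>k<n. G (c k * w))"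
  have sub1: "of_real \<delta> + c k * w \<in> cball 0 1" if "w \<in> cball 0 r" for k w
  proof -
    have "norm (of_real \<delta> + c k * w) \<le> norm (of_real \<delta> :: complex) + norm (c k * w)" by (rule norm_triangle_ineq)
    also have "\<dots> \<le> \<delta> + r" using that d by (simp add: norm_mult c1)
    finally show ?thesis using r1 by simp
  qed
  have sub2: "of_real \<delta> + c k * w \<in> ball 0 1" if "w \<in> ball 0 r" for k w
  proof -
    have "norm (of_real \<delta> + c k * w) \<le> norm (of_real \<delta> :: complex) + norm (c k * w)" by (rule norm_triangle_ineq)
    also have "\<dots> < \<delta> + r" using that d by (simp add: norm_mult c1)
    finally show ?thesis using r1 by simp
  qed
  have holh: "h holomorphic_on ball 0 r"
    unfolding h_def G_def
  proof (intro holomorphic_on_prod holomorphic_intros)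
    fix k
    have "(g \<circ> (\<lambda>w. of_real \<delta> + c k * w)) holomorphic_on ball 0 r"
      by (rule holomorphic_on_compose_gen[OF _ hol]) (auto intro!: holomorphic_intros sub2)
    thus "(\<lambda>w. g (of_real \<delta> + c k * w)) holomorphic_on ball 0 r" by (simp add: o_def)
  qed
  have conth: "continuous_on (cball 0 r) h"
    unfolding h_def G_def
  proof (intro continuous_on_prod continuous_intros)
    fix k
    show "continuous_on (cball 0 r) (\<lambda>w. g (of_real \<delta> + c k * w))"
      by (rule continuous_on_compose2[OF cont]) (auto intro!: continuous_intros sub1)
  qed
  define B where "B = 4*r^2*m*(2*lam*M*r/\<delta>)^(n-1)"
  have bnd: "norm (h w) \<le> B" if w: "norm w = r" for w
  proof -
    obtain k0 where k0: "k0 < n" "of_real \<delta> + c k0 * w \<in> arcP \<delta> \<mu> a"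
      using arc_pt[OF r_def r0 n(1) n(2)[folded r_def] w] unfolding c_def by blast
    have nw: "norm (c k * w) = r" for k by (simp add: norm_mult c1 w)
    have m0: "0 \<le> m" using m k0 norm_ge_zero order_trans by blast
    have "norm (c k0 * w - of_real r) \<le> norm (c k0 * w) + norm (of_real r :: complex)" by (rule norm_triangle_ineq4)
    also have "\<dots> = 2*r" using nw r0 by simp
    finally have "norm (c k0 * w - of_real r)^2 \<le> (2*r)^2" by (rule power_mono) simp
    hence G0: "norm (G (c k0 * w)) \<le> m * (4*r^2)"
      unfolding G_def norm_mult norm_power
      using m k0 m0 by (intro mult_mono) (auto simp: power_mult_distrib)
    have Gk: "norm (G (c k * w)) \<le> 2*lam*M*r/\<delta>" for k
      unfolding G_def norm_mult norm_power using geom[OF d r0 r1 lm hyp nw] .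
    have "norm (h w) = (\<Prod>k<n. norm (G (c k * w)))" unfolding h_def by (simp add: prod_norm)
    also have "\<dots> = norm (G (c k0 * w)) * (\<Prod>k\<in>{..<n}-{k0}. norm (G (c k * w)))"
      using k0 by (simp add: prod.remove)
    also have "\<dots> \<le> (m * (4*r^2)) * (\<Prod>k\<in>{..<n}-{k0}. 2*lam*M*r/\<delta>)"
      using G0 Gk m0 by (intro mult_mono prod_mono) (auto simp: prod_nonneg)
    also have "\<dots> = B" unfolding B_def using k0 by (simp add: card_Diff_singleton)
    finally show ?thesis .
  qed
  have "norm (h 0) \<le> B"
    using maximum_modulus_frontier[of h "cball 0 r" B 0] holh conth bnd r0 by auto
  moreover have "h 0 = (g \<delta> * (of_real r)^2)^n" unfolding h_def G_def by simp
  ultimately have "norm (g \<delta>)^n * r^(2*n) \<le> B" using r0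
    by (simp add: norm_mult norm_power power_mult_distrib power_mult)
  thus ?thesis unfolding B_def r_def .
qed



lemma arith:
  fixes x y \<kappa> r a :: real and N :: nat
  assumes x: "x = \<kappa>*y" "x \<le> 1/4" and k: "0 < \<kappa>" "\<kappa> \<le> 1" and y: "0 < y" "y \<le> 1"
    and r: "0 < r" "r \<le> 1" and a: "0 < a" "a < pi" and N: "real N \<le> 2*pi*r/a"
  shows "x powr (30/a) \<le> \<kappa>^(N+1) * r^N * (y/2)^N / 4"
proof -
  have x0: "0 < x" using x k y by simp
  have x1: "x \<le> 1" using x by simp
  have pa: "1 \<le> pi/a" using a by simp
  have Nb: "real N \<le> 2*pi/a"
  proof -
    have "2*pi*r/a \<le> 2*pi*1/a" using r a by (intro divide_right_mono mult_left_mono) auto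
    thus ?thesis using N by simp
  qed
  have A1: "x powr (2*pi/a+1) \<le> \<kappa>^(N+1) * y^N"
  proof -
    have "x powr (2*pi/a+1) \<le> x powr (real (N+1))"
      using Nb x0 x1 by (intro powr_mono') auto
    also have "\<dots> = x^(N+1)" using x0 by (rule powr_realpow)
    also have "\<dots> = \<kappa>^(N+1) * y^(N+1)" using x by (simp add: power_mult_distrib)
    also have "\<dots> \<le> \<kappa>^(N+1) * y^N"
      using y k by (intro mult_left_mono) (auto simp: power_le_one)
    finally show ?thesis .
  qed
  have A2: "x powr (pi/a) \<le> (1/2)^N"
  proof -
    have "x powr (pi/a) \<le> (1/4) powr (pi/a)" using x x0 pa by (intro powr_mono2) auto
    also have "(1/4::real) powr (pi/a) = (1/2) powr (2*pi/a)"
    proof -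
      have h1: "((1/2::real) powr 2) powr (pi/a) = (1/2) powr (2*pi/a)" using powr_powr[of "1/2::real" 2 "pi/a"] by simp
      have h2: "(1/2::real) powr 2 = 1/4" using powr_realpow[of "1/2::real" 2] by (simp add: power2_eq_square)
      show ?thesis using h1 h2 by simp
    qed
    also have "\<dots> \<le> (1/2) powr (real N)" using Nb by (intro powr_mono') auto
    also have "\<dots> = (1/2)^N" by (simp add: powr_realpow)
    finally show ?thesis .
  qed
  have A3: "x powr (2*pi/a) \<le> r^N"
  proof -
    have l4: "ln x \<le> -1"
    proof -
      have "ln x \<le> ln (1/4)" using x0 x by simp
      also have "ln (1/4::real) = - ln 4" by (simp add: ln_div)
      also have "1 \<le> ln (4::real)"
      proof -
        have "exp 1 \<le> (4::real)" using exp_le by linarith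
        thus ?thesis by (subst ln_ge_iff) auto
      qed
      hence "- ln 4 \<le> (-1::real)" by simp
      finally show ?thesis .
    qed
    have "2*pi/a * ln x \<le> 2*pi/a * (-1)"
      using l4 a by (intro mult_left_mono) auto
    also have "2*pi/a * (-1) \<le> 2*pi/a * (r * ln r)"
    proof -
      have "ln (1/r) \<le> 1/r - 1" using r by (intro ln_le_minus_one) auto
      hence "- ln r \<le> 1/r - 1" using r by (simp add: ln_div)
      hence "- r * ln r \<le> r * (1/r - 1)" using r mult_left_mono by fastforce
      hence "r * ln r \<ge> r - 1" using r by (simp add: algebra_simps)
      hence "r * ln r \<ge> -1" using r by linarith
      thus ?thesis using a by (intro mult_left_mono) auto
    qed
    also have "2*pi/a * (r * ln r) = (2*pi*r/a) * ln r" by simp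
    also have "\<dots> \<le> real N * ln r"
      using N r by (intro mult_right_mono_neg) auto
    finally have E: "2*pi/a * ln x \<le> real N * ln r" .
    have "x powr (2*pi/a) = exp (2*pi/a * ln x)" using x0 by (simp add: powr_def)
    also have "\<dots> \<le> exp (real N * ln r)" using E by simp
    also have "exp (real N * ln r) = r^N" using r by (simp add: exp_of_nat_mult)
    finally show ?thesis .
  qed
  have A4: "x powr (pi/a) \<le> 1/4"
  proof -
    have "x powr (pi/a) \<le> x powr 1" using pa x0 x1 by (intro powr_mono') auto
    thus ?thesis using x x0 by simp
  qed
  have "x powr (30/a) \<le> x powr ((2*pi/a+1) + pi/a + 2*pi/a + pi/a)"
  proof (intro powr_mono')
    have "(2*pi/a+1) + pi/a + 2*pi/a + pi/a = (6*pi + a)/a" using a by (simp add: field_simps)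
    also have "\<dots> \<le> 30/a" using a pi_less_4 by (intro divide_right_mono) auto
    finally show "(2*pi/a+1) + pi/a + 2*pi/a + pi/a \<le> 30/a" .
  qed (use x0 x1 in auto)
  also have "\<dots> = x powr (2*pi/a+1) * x powr (pi/a) * x powr (2*pi/a) * x powr (pi/a)"
    by (simp only: powr_add)
  also have "\<dots> \<le> (\<kappa>^(N+1) * y^N) * (1/2)^N * r^N * (1/4)"
    using A1 A2 A3 A4 x0 k y r by (intro mult_mono) auto
  also have "\<dots> = \<kappa>^(N+1) * r^N * (y/2)^N / 4" by (simp add: power_divide field_simps)
  finally show ?thesis .
qed

theorem corollary5p6:
  "\<exists>C::real. C > 0 \<and>
    (\<forall>(\<delta>::real) (a::real) (lam::real) (M::real) (\<kappa>::real) (\<mu>::real) (g::complex \<Rightarrow> complex).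
      0 < \<delta> \<and> \<delta> \<le> 1/4 \<and> 0 < a \<and> a < pi \<and> 1 \<le> lam \<and> 1 \<le> M \<and>
      0 < \<kappa> \<and> \<kappa> \<le> 1 \<and> 0 \<le> \<mu> \<and> \<mu> < 1 - \<delta> \<and>
      continuous_on (cball 0 1) g \<and> g holomorphic_on ball 0 1 \<and>
      norm (g (complex_of_real \<delta>)) \<ge> \<kappa> \<and>
      (\<forall>\<gamma>::real. 0 < \<gamma> \<and> \<gamma> \<le> 1 - \<delta> \<longrightarrow>
         (\<forall>z. norm z \<le> 1 - \<gamma> \<longrightarrow> norm (g z) \<le> lam * M / \<gamma>))
      \<longrightarrow> (\<exists>z\<in>arcP \<delta> \<mu> a. norm (g z) \<ge> (\<delta> * \<kappa> / (lam * M)) powr (C / a)))"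
  proof -
  have main: "\<exists>z\<in>arcP \<delta> \<mu> a. norm (g z) \<ge> (\<delta> * \<kappa> / (lam * M)) powr (30 / a)"
    if d: "0 < \<delta>" "\<delta> \<le> 1/4" and a: "0 < a" "a < pi" and l: "1 \<le> lam" "1 \<le> M"
      and k: "0 < \<kappa>" "\<kappa> \<le> 1" and mu: "0 \<le> \<mu>" "\<mu> < 1 - \<delta>"
      and cont: "continuous_on (cball 0 1) g" and hol: "g holomorphic_on ball 0 1"
      and gk: "norm (g (complex_of_real \<delta>)) \<ge> \<kappa>"
      and hyp: "\<forall>\<gamma>::real. 0 < \<gamma> \<and> \<gamma> \<le> 1 - \<delta> \<longrightarrow>
         (\<forall>z. norm z \<le> 1 - \<gamma> \<longrightarrow> norm (g z) \<le> lam * M / \<gamma>)"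
    for \<delta> a lam M \<kappa> \<mu> and g :: "complex \<Rightarrow> complex"
  proof -
    define r where "r = 1-\<delta>-\<mu>"
    have r0: "0 < r" and r1: "r \<le> 1" and r2: "\<delta> + r \<le> 1" using mu d by (auto simp: r_def)
    have lm1: "1 \<le> lam*M" using l mult_mono[of 1 lam 1 M] by simp
    hence lm: "0 < lam*M" by simp
    define n where "n = nat (ceiling (2*pi*r/a))"
    have xpos: "0 < 2*pi*r/a" using r0 a by simp
    have nreal: "real n = real_of_int (ceiling (2*pi*r/a))" unfolding n_def
      using xpos by (intro of_nat_nat) (simp add: order_less_imp_le)
    have n1: "2*pi*r/a \<le> real n" using nreal by simp
    have n2: "real n < 2*pi*r/a + 1" using nreal ceiling_correct[of "2*pi*r/a"] by linarith
    have n0: "n \<ge> 1" using n1 xpos by (cases n) auto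
    have npos: "0 < real n" using n0 by simp
    have "2*pi*r \<le> a * real n" using n1 a by (simp add: field_simps)
    hence nth: "2*pi/real n \<le> a/(1-\<delta>-\<mu>)" using npos r0 a unfolding r_def[symmetric]
      by (simp add: field_simps)
    define b where "b = a/(2*r)"
    define p where "p = (\<lambda>t. complex_of_real \<delta> + complex_of_real r * cis t)"
    have arcP_eq: "arcP \<delta> \<mu> a = p ` {-b..b}"
      unfolding arcP_def Let_def p_def b_def r_def[symmetric]
      by (auto simp: abs_le_iff)
    have pin: "p t \<in> cball 0 1" for t
    proof -
      have "norm (p t) \<le> norm (complex_of_real \<delta>) + norm (complex_of_real r * cis t)"
        unfolding p_def by (rule norm_triangle_ineq)
      also have "\<dots> = \<delta> + r" using d r0 by (simp add: norm_mult)
      finally show ?thesis using r2 by simp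
    qed
    have contp: "continuous_on {-b..b} (\<lambda>t. norm (g (p t)))"
      by (intro continuous_intros continuous_on_compose2[OF cont])
         (auto simp: p_def intro!: continuous_intros pin[unfolded p_def])
    have b0: "0 \<le> b" using a r0 by (simp add: b_def)
    obtain t0 where t0: "t0 \<in> {-b..b}" and t0max: "\<forall>t\<in>{-b..b}. norm (g (p t)) \<le> norm (g (p t0))"
      using continuous_attains_sup[OF compact_Icc _ contp] b0 by auto
    define m where "m = norm (g (p t0))"
    have mP: "\<forall>z\<in>arcP \<delta> \<mu> a. norm (g z) \<le> m" unfolding arcP_eq m_def using t0max by auto
    have z0: "p t0 \<in> arcP \<delta> \<mu> a" unfolding arcP_eq using t0 by auto
    have K: "norm (g \<delta>)^n * (1-\<delta>-\<mu>)^(2*n) \<le> 4*(1-\<delta>-\<mu>)^2*m*(2*lam*M*(1-\<delta>-\<mu>)/\<delta>)^(n-1)"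
      by (rule key[OF d mu lm cont hol hyp n0 nth mP])
    define N where "N = n - 1"
    have nN: "n = N + 1" using n0 by (simp add: N_def)
    define Q where "Q = (2*lam*M/\<delta>)^N"
    have "0 < 2*(lam*M)/\<delta>" using lm d by simp
    hence "0 < 2*lam*M/\<delta>" by (simp add: mult.assoc)
    hence Q0: "0 < Q" unfolding Q_def by simp
    have "\<kappa>^n * r^(2*n) \<le> norm (g \<delta>)^n * r^(2*n)"
      using gk k r0 by (intro mult_right_mono power_mono) auto
    also have "\<dots> \<le> 4*r^2*m*(2*lam*M*r/\<delta>)^N" using K unfolding r_def N_def .
    finally have K2: "\<kappa>^n * r^(2*n) \<le> 4*r^2*m*(2*lam*M*r/\<delta>)^N" .
    have e1: "\<kappa>^(N+1) * r^N * (r^N * r^2) \<le> (4*m*Q) * (r^N * r^2)"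
    proof -
      have "2*n = N + (N + 2)" using nN by simp
      hence "r^(2*n) = r^N * (r^N * r^2)" by (simp only: power_add)
      hence E1: "\<kappa>^(N+1) * r^N * (r^N * r^2) = \<kappa>^n * r^(2*n)"
        using nN by (simp add: mult.assoc)
      have E2: "4*r^2*m*(2*lam*M*r/\<delta>)^N = (4*m*Q) * (r^N * r^2)"
      proof -
        have "2*lam*M*r/\<delta> = (2*lam*M/\<delta>)*r" by simp
        hence "(2*lam*M*r/\<delta>)^N = Q * r^N" unfolding Q_def by (simp only: power_mult_distrib)
        thus ?thesis by (simp add: algebra_simps)
      qed
      show ?thesis unfolding E1 E2[symmetric] by (rule K2)
    qed
    have "0 < r^N * r^2" using r0 by simp
    hence e2: "\<kappa>^(N+1) * r^N \<le> 4*m*Q" using e1 by (rule mult_le_cancel_right_pos[THEN iffD1])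
    define y where "y = \<delta>/(lam*M)"
    have y0: "0 < y" "y \<le> 1" unfolding y_def using d lm lm1
      by (auto simp: divide_le_eq)
    have yQ: "(y/2)^N = 1/Q" unfolding y_def Q_def by (simp add: power_divide field_simps)
    have L: "\<kappa>^(N+1) * r^N * (y/2)^N / 4 \<le> m"
    proof -
      have "\<kappa>^(N+1) * r^N * (y/2)^N / 4 = (\<kappa>^(N+1) * r^N) / Q / 4" unfolding yQ by simp
      also have "\<dots> \<le> (4*m*Q) / Q / 4" using e2 Q0 by (intro divide_right_mono) auto
      also have "\<dots> = m" using Q0 by simp
      finally show ?thesis .
    qed
    define x where "x = \<delta> * \<kappa> / (lam * M)"
    have xk: "x = \<kappa> * y" unfolding x_def y_def by simp
    have x4: "x \<le> 1/4"
    proof -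
      have "x \<le> \<kappa> * 1" unfolding xk using y0 k by (intro mult_left_mono) auto
      also have "\<dots> \<le> 1" using k by simp
      finally have "x \<le> 1" .
      have "x = \<kappa> * y" by (rule xk)
      also have "\<dots> \<le> 1 * y" using k y0 by (intro mult_right_mono) auto
      also have "\<dots> \<le> \<delta>" unfolding y_def using d lm1 lm by (simp add: divide_le_eq mult_left_mono[of 1 "lam*M" \<delta>, simplified])
      finally show ?thesis using d by simp
    qed
    have NN: "real N \<le> 2*pi*r/a" using n2 nN by simp
    have "x powr (30/a) \<le> \<kappa>^(N+1) * r^N * (y/2)^N / 4"
      by (rule arith[OF xk x4 k y0 r0 r1 a NN])
    also have "\<dots> \<le> m" by (rule L)
    finally show ?thesis using z0 unfolding m_def x_def by auto
  qed
  show ?thesis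
    apply (rule exI[of _ 30])
    apply (intro conjI allI impI)
     apply simp
    apply (elim conjE)
    apply (rule main)
                 apply assumption+
    done
qed

end
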